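(* (i) Let $a,b,c\in\mathbb{R}$ be such that $$B=\begin{pmatrix}1&a&b\\ a&1&c\\ b&c&1\end{pmatrix}$$ is positive semidefinite. Then $$\big|\,|a|-|b|\,\big|\le\sqrt{1-|c|^2}\le\sqrt2\,\sqrt{1-|c|},$$ and for every real $k\ge2$, $$\big|\,|a|^k-|b|^k\,\big|\le\sqrt{1-|c|^k}.$$ (ii) If $0\le\alpha,\beta,\gamma\le\pi/2$ and $|\alpha-\beta|\le\gamma\le\alpha+\beta$, then for every integer $k\ge1$, $$|\cos^k\alpha-\cos^k\beta|\le\sqrt{k}\,\sin\gamma.$$ *)

theory Defs
  imports "HOL-Analysis.Analysis"
begin

definition psd_matrix :: "real^'n^'n \<Rightarrow> bool" where
  "psd_matrix A \<longleftrightarrow> transpose A = A \<and> (\<forall>x. 0 \<le> x \<bullet> (A *v x))"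

definition Bmat :: "real \<Rightarrow> real \<Rightarrow> real \<Rightarrow> real^3^3" where
  "Bmat a b c = vector [vector [1, a, b], vector [a, 1, c], vector [b, c, 1]]"

end

theory Submission
  imports Defs
begin

lemma tangent_powr:
  fixes p s t :: real
  assumes p: "p \<ge> 1" and s: "s \<ge> 0" and t: "t \<ge> 0"
  shows "s powr p + p * s powr (p - 1) * (t - s) \<le> t powr p"
proof (cases "s = 0")
  case True thus ?thesis by simp
next
  case False
  hence s0: "s > 0" using s by simp
  show ?thesis
  proof (cases "t = 0")
    case True
    have "s powr p = s powr (p-1) * s" using s0 by (simp add: powr_diff)
    hence "s powr p + p * s powr (p - 1) * (t - s) = (1 - p) * s powr p" using True by (simp add: algebra_simps)
    also have "\<dots> \<le> 0" using p by (simp add: mult_nonpos_nonneg)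
    finally show ?thesis using True by simp
  next
    case False
    hence t0: "t > 0" using t by simp
    have "p * s powr (p - 1) * (t - s) \<le> t powr p - s powr p"
      using s0 t0 by (intro convex_on_imp_above_tangent[where A = "{0<..}"] powr_convex p)
         (auto intro!: derivative_eq_intros simp: interior_open)
    thus ?thesis by simp
  qed
qed

lemma Q_expand:
  "(vector [p, q, r] :: real^3) \<bullet> (Bmat a b c *v vector [p, q, r]) =
     p^2 + q^2 + r^2 + 2*a*p*q + 2*b*p*r + 2*c*q*r"
  unfolding Bmat_def inner_vec_def matrix_vector_mult_def
  by (simp add: sum_3 power2_eq_square algebra_simps)

lemma sq_powr: "(u::real) \<ge> 0 \<Longrightarrow> (u powr q)^2 = (u^2) powr q"
  by (simp add: power2_eq_square powr_mult)

lemma factor_ineq: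
  fixes u p :: real
  assumes u: "0 \<le> u" "u \<le> 1" and p: "p \<ge> 1"
  shows "p * (u powr (p-1) * sqrt (1 - u^2))^2 \<le> 1 - (u powr p)^2"
proof -
  define C where "C = u^2"
  have C: "0 \<le> C" "C \<le> 1" using u by (auto simp: C_def power_le_one)
  have t: "C powr p + p * C powr (p - 1) * (1 - C) \<le> 1"
    using tangent_powr[OF p C(1), of 1] by simp
  have e1: "(u powr (p-1) * sqrt (1 - u^2))^2 = C powr (p-1) * (1 - C)"
    using u C by (simp add: power_mult_distrib sq_powr C_def)
  have e2: "(u powr p)^2 = C powr p" using u by (simp add: sq_powr C_def)
  show ?thesis unfolding e1 e2 using t by (simp add: mult.assoc)
qed

lemma fh_lower:
  fixes u v p :: real
  assumes u: "0 \<le> u" "u \<le> 1" and v: "0 \<le> v" "v \<le> 1" and p: "p \<ge> 1"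
    and w: "0 \<le> u * v - sqrt(1-u^2) * sqrt(1-v^2)"
  shows "u powr p * v powr p - sqrt ((1 - (u powr p)^2) * (1 - (v powr p)^2))
         \<le> (u * v - sqrt(1-u^2) * sqrt(1-v^2)) powr p"
proof -
  define A where "A = u * v"
  define B where "B = sqrt(1-u^2) * sqrt(1-v^2)"
  define P where "P = u powr (p-1) * sqrt (1 - u^2)"
  define R where "R = v powr (p-1) * sqrt (1 - v^2)"
  have A0: "A \<ge> 0" using u v by (simp add: A_def)
  have "A powr p + p * A powr (p - 1) * ((A - B) - A) \<le> (A - B) powr p"
    using tangent_powr[OF p A0, of "A - B"] w by (simp add: A_def B_def)
  hence 1: "A powr p - p * A powr (p - 1) * B \<le> (A - B) powr p" by (simp add: algebra_simps)
  have 2: "A powr p = u powr p * v powr p" using u v by (simp add: A_def powr_mult)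
  have 3: "p * A powr (p - 1) * B = p * P * R"
    using u v by (simp add: A_def B_def P_def R_def powr_mult)
  have P0: "P \<ge> 0" "R \<ge> 0" using u v by (auto simp: P_def R_def power_le_one intro!: mult_nonneg_nonneg)
  have "(p * P * R)^2 = (p * P^2) * (p * R^2)" by (simp add: power2_eq_square)
  also have "\<dots> \<le> (1 - (u powr p)^2) * (1 - (v powr p)^2)"
  proof -
    have a: "p * P^2 \<le> 1 - (u powr p)^2" "p * R^2 \<le> 1 - (v powr p)^2"
      using factor_ineq[OF u p] factor_ineq[OF v p] by (auto simp: P_def R_def)
    have b: "0 \<le> p * P^2" "0 \<le> p * R^2" using p by auto
    show ?thesis using a b by (intro mult_mono) auto
  qed
  finally have "p * P * R \<le> sqrt ((1 - (u powr p)^2) * (1 - (v powr p)^2))"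
    by (rule real_le_rsqrt)
  hence "A powr p - sqrt ((1 - (u powr p)^2) * (1 - (v powr p)^2)) \<le> (A - B) powr p"
    using 1 3 by linarith
  thus ?thesis using 2 unfolding A_def B_def by simp
qed

lemma final_alg:
  fixes X X' V V' Y :: real
  assumes "X \<ge> 0" "X' \<ge> 0" "V \<ge> 0" "V' \<ge> 0" "X^2 + X'^2 = 1" "V^2 + V'^2 = 1"
    "0 \<le> Y" "Y \<le> X" "X * V - X' * V' \<le> Y"
  shows "X^2 - Y^2 \<le> V'"
proof (cases "X * V - X' * V' \<ge> 0")
  case True
  define W where "W = X * V - X' * V'"
  have 1: "Y^2 \<ge> W^2" using True assms(7,9) unfolding W_def by (intro power_mono) auto
  define S where "S = V' * (X^2 - X'^2) + 2*X*X'*V"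
  have 2: "X^2 - W^2 = V' * S"
    unfolding W_def S_def using assms(5,6) by algebra
  have 3: "S \<le> 1"
  proof -
    have "(X^2 - X'^2)^2 + (2*X*X')^2 = 1" using assms(5) by algebra
    moreover have "0 \<le> (V' - (X^2 - X'^2))^2 + (V - 2*X*X')^2" by simp
    moreover have "(V' - (X^2 - X'^2))^2 + (V - 2*X*X')^2 = (V^2 + V'^2) + ((X^2 - X'^2)^2 + (2*X*X')^2) - 2 * S"
      unfolding S_def by algebra
    ultimately show ?thesis using assms(6) by linarith
  qed
  have "V' * S \<le> V' * 1" using 3 assms(4) by (rule mult_left_mono)
  thus ?thesis using 1 2 by linarith
next
  case False
  hence "X * V < X' * V'" by simp
  hence "(X*V)^2 \<le> (X'*V')^2" using assms by (intro power_mono) auto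
  moreover have "(X'*V')^2 = (X*V)^2 + 1 - X^2 - V^2" using assms(5,6) by algebra
  ultimately have a: "X^2 \<le> V'^2" using assms(6) by linarith
  have "V'^2 \<le> 1" using assms(6) by (smt (verit) zero_le_power2)
  hence "V' \<le> 1" using power2_le_imp_le[of V' 1] by simp
  hence "V' * V' \<le> V' * 1" using assms(4) by (intro mult_left_mono)
  hence "V'^2 \<le> V'" by (simp add: power2_eq_square)
  moreover have "0 \<le> Y^2" by simp
  ultimately show ?thesis using a by linarith
qed

lemma core_ordered:
  fixes x y z k :: real
  assumes y0: "0 \<le> y" and yx: "y \<le> x" and x1: "x \<le> 1" and z0: "0 \<le> z" and z1: "z \<le> 1"
    and con: "x^2 + y^2 + z^2 \<le> 1 + 2*x*y*z" and k: "k \<ge> 2"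
  shows "x powr k - y powr k \<le> sqrt (1 - z powr k)"
proof -
  define p where "p = k / 2"
  have p: "p \<ge> 1" using k by (simp add: p_def)
  have kp: "k = p + p" by (simp add: p_def)
  have x0: "0 \<le> x" using y0 yx by linarith
  have xx1: "x^2 \<le> 1" using x0 x1 by (simp add: power_le_one)
  have yy1: "y^2 \<le> x^2" using y0 yx by (intro power_mono) auto
  define x' where "x' = sqrt (1 - x^2)"
  define y' where "y' = sqrt (1 - y^2)"
  have x'2: "x'^2 = 1 - x^2" using xx1 by (simp add: x'_def)
  have y'2: "y'^2 = 1 - y^2" using xx1 yy1 by (simp add: y'_def)
  have x'0: "x' \<ge> 0" and y'0: "y' \<ge> 0" using xx1 yy1 by (simp_all add: x'_def y'_def)
  have x'y': "x' \<le> y'" unfolding x'_def y'_def using yy1 xx1 by simp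
  define v where "v = x * y + x' * y'"
  define v' where "v' = x * y' - x' * y"
  have "x' * y \<le> y' * x" using x'y' yx x'0 y0 by (intro mult_mono) auto
  hence v'0: "v' \<ge> 0" by (simp add: v'_def mult.commute)
  have "v^2 + v'^2 = (x^2 + x'^2) * (y^2 + y'^2)" unfolding v_def v'_def by algebra
  moreover have "x^2 + x'^2 = 1" "y^2 + y'^2 = 1" using x'2 y'2 by simp_all
  ultimately have vv: "v^2 + v'^2 = 1" by simp
  have v0: "v \<ge> 0" unfolding v_def using x0 y0 x'0 y'0 by simp
  have "v^2 \<le> 1" using vv by (smt (verit) zero_le_power2)
  hence v1: "v \<le> 1" using power2_le_imp_le[of v 1] by simp
  have "1 - v^2 = v'^2" using vv by simp
  hence sv: "sqrt (1 - v^2) = v'" using v'0 by simp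
  have "x * v - x' * v' = (x^2 + x'^2) * y" unfolding v_def v'_def by algebra
  hence yv: "y = x * v - x' * v'" using \<open>x^2 + x'^2 = 1\<close> by simp
  have e1: "(z - x*y)^2 = z^2 - 2*x*y*z + x^2*y^2" by algebra
  have e2: "(x' * y')^2 = (1-x^2)*(1-y^2)" using x'2 y'2 by (simp only: power_mult_distrib)
  have e3: "(1-x^2)*(1-y^2) = 1 - x^2 - y^2 + x^2*y^2" by algebra
  have "(z - x*y)^2 \<le> (x' * y')^2" using e1 e2 e3 con by linarith
  moreover have xy0: "0 \<le> x' * y'" using x'0 y'0 by (rule mult_nonneg_nonneg)
  ultimately have "z - x*y \<le> x' * y'" by (rule power2_le_imp_le)
  hence "z \<le> x*y + x' * y'" by linarith
  hence zv: "z \<le> v" unfolding v_def .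
  have sx: "sqrt (1-x^2) = x'" by (simp add: x'_def)
  have we: "x * v - sqrt (1 - x^2) * sqrt (1 - v^2) = y" by (simp only: sx sv yv)
  have w0: "0 \<le> x * v - sqrt (1 - x^2) * sqrt (1 - v^2)"
    using y0 we by linarith
  have fh: "x powr p * v powr p - sqrt ((1 - (x powr p)^2) * (1 - (v powr p)^2)) \<le> y powr p"
    using fh_lower[OF x0 x1 v0 v1 p w0] unfolding we .
  define X where "X = x powr p"
  define V where "V = v powr p"
  define Y where "Y = y powr p"
  define X' where "X' = sqrt (1 - X^2)"
  define V' where "V' = sqrt (1 - V^2)"
  have X0: "X \<ge> 0" "X \<le> 1" using x0 x1 p by (auto simp: X_def intro: powr_le1)
  have V0: "V \<ge> 0" "V \<le> 1" using v0 v1 p by (auto simp: V_def intro: powr_le1)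
  have Y0: "Y \<ge> 0" "Y \<le> X" using y0 yx p by (auto simp: Y_def X_def intro: powr_mono2)
  have XX: "X^2 \<le> 1" "V^2 \<le> 1" using X0 V0 by (simp_all add: power_le_one)
  have "X^2 - Y^2 \<le> V'"
  proof (rule final_alg[where X' = X'])
    show "X^2 + X'^2 = 1" "V^2 + V'^2 = 1" using XX by (simp_all add: X'_def V'_def)
    show "X * V - X' * V' \<le> Y" using fh by (simp add: X_def V_def Y_def X'_def V'_def real_sqrt_mult)
  qed (use X0 V0 Y0 XX in \<open>auto simp: X'_def V'_def\<close>)
  moreover have "X^2 = x powr k" "Y^2 = y powr k"
    unfolding X_def Y_def kp power2_eq_square by (rule powr_add[symmetric])+
  moreover have "V' \<le> sqrt (1 - z powr k)"
  proof -
    have "z powr p \<le> V" using zv z0 p by (auto simp: V_def intro: powr_mono2)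
    hence "(z powr p)^2 \<le> V^2" by (intro power_mono) auto
    moreover have "(z powr p)^2 = z powr k" unfolding kp power2_eq_square by (rule powr_add[symmetric])
    ultimately show ?thesis by (simp add: V'_def)
  qed
  ultimately show ?thesis by linarith
qed

lemma core_abs:
  fixes x y z k :: real
  assumes "0 \<le> x" "x \<le> 1" "0 \<le> y" "y \<le> 1" "0 \<le> z" "z \<le> 1"
    and con: "x^2 + y^2 + z^2 \<le> 1 + 2*x*y*z" and k: "k \<ge> 2"
  shows "\<bar>x powr k - y powr k\<bar> \<le> sqrt (1 - z powr k)"
proof (cases "y \<le> x")
  case True
  have "x powr k - y powr k \<le> sqrt (1 - z powr k)" using core_ordered[OF assms(3) True assms(2,5,6) con k] .
  moreover have "y powr k \<le> x powr k" using True assms k by (intro powr_mono2) auto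
  ultimately show ?thesis by (smt (verit) real_sqrt_ge_zero powr_ge_zero)
next
  case False
  have con': "y^2 + x^2 + z^2 \<le> 1 + 2*y*x*z" using con by (simp add: algebra_simps)
  have "y powr k - x powr k \<le> sqrt (1 - z powr k)"
    using core_ordered[OF assms(1) _ assms(4,5,6) con' k] False by simp
  moreover have "x powr k \<le> y powr k" using False assms k by (intro powr_mono2) auto
  ultimately show ?thesis by (smt (verit) real_sqrt_ge_zero powr_ge_zero)
qed

lemma partA:
  fixes x y z :: real
  assumes "0 \<le> x" "x \<le> 1" "0 \<le> y" "y \<le> 1" "0 \<le> z" "z \<le> 1"
    and con: "x^2 + y^2 + z^2 \<le> 1 + 2*x*y*z"
  shows "\<bar>x - y\<bar> \<le> sqrt (1 - z^2)"
proof -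
  have "0 \<le> x * y * (1 - z)" using assms by simp
  moreover have "\<bar>x - y\<bar>^2 = x^2 + y^2 - 2*x*y" by (simp add: power2_eq_square algebra_simps)
  ultimately have "\<bar>x - y\<bar>^2 \<le> 1 - z^2" using con by (simp add: algebra_simps)
  thus ?thesis by (rule real_le_rsqrt)
qed

lemma psd_facts:
  assumes "psd_matrix (Bmat a b c)"
  shows "\<bar>a\<bar> \<le> 1" "\<bar>b\<bar> \<le> 1" "\<bar>c\<bar> \<le> 1"
    "\<bar>a\<bar>^2 + \<bar>b\<bar>^2 + \<bar>c\<bar>^2 \<le> 1 + 2*\<bar>a\<bar>*\<bar>b\<bar>*\<bar>c\<bar>"
proof -
  have Q: "\<And>p q r. 0 \<le> p^2 + q^2 + r^2 + 2*a*p*q + 2*b*p*r + 2*c*q*r"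
    using assms unfolding psd_matrix_def by (metis Q_expand)
  have "0 \<le> 2 + 2*a" "0 \<le> 2 - 2*a" using Q[of 1 1 0] Q[of 1 "-1" 0] by simp_all
  thus a1: "\<bar>a\<bar> \<le> 1" by linarith
  have "0 \<le> 2 + 2*b" "0 \<le> 2 - 2*b" using Q[of 1 0 1] Q[of 1 0 "-1"] by simp_all
  thus b1: "\<bar>b\<bar> \<le> 1" by linarith
  have "0 \<le> 2 + 2*c" "0 \<le> 2 - 2*c" using Q[of 0 1 1] Q[of 0 1 "-1"] by simp_all
  thus c1: "\<bar>c\<bar> \<le> 1" by linarith
  define D where "D = 1 - a^2 - b^2 - c^2 + 2*a*b*c"
  have Dc: "0 \<le> (1 - c^2) * D"
  proof -
    have "(1-c^2)^2 + (b*c-a)^2 + (a*c-b)^2 + 2*a*(1-c^2)*(b*c-a) + 2*b*(1-c^2)*(a*c-b) + 2*c*(b*c-a)*(a*c-b) = (1 - c^2) * D"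
      unfolding D_def by algebra
    thus ?thesis using Q[of "1-c^2" "b*c-a" "a*c-b"] by simp
  qed
  have Db: "0 \<le> (1 - b^2) * D"
  proof -
    have "(b*c-a)^2 + (1-b^2)^2 + (a*b-c)^2 + 2*a*(b*c-a)*(1-b^2) + 2*b*(b*c-a)*(a*b-c) + 2*c*(1-b^2)*(a*b-c) = (1 - b^2) * D"
      unfolding D_def by algebra
    thus ?thesis using Q[of "b*c-a" "1-b^2" "a*b-c"] by simp
  qed
  have Da: "0 \<le> (1 - a^2) * D"
  proof -
    have "(a*c-b)^2 + (a*b-c)^2 + (1-a^2)^2 + 2*a*(a*c-b)*(a*b-c) + 2*b*(a*c-b)*(1-a^2) + 2*c*(a*b-c)*(1-a^2) = (1 - a^2) * D"
      unfolding D_def by algebra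
    thus ?thesis using Q[of "a*c-b" "a*b-c" "1-a^2"] by simp
  qed
  have abc: "a*b*c \<le> \<bar>a\<bar>*\<bar>b\<bar>*\<bar>c\<bar>"
    by (metis abs_ge_self abs_mult)
  have sq: "\<bar>a\<bar>^2 = a^2" "\<bar>b\<bar>^2 = b^2" "\<bar>c\<bar>^2 = c^2" by simp_all
  show "\<bar>a\<bar>^2 + \<bar>b\<bar>^2 + \<bar>c\<bar>^2 \<le> 1 + 2*\<bar>a\<bar>*\<bar>b\<bar>*\<bar>c\<bar>"
  proof (cases "D \<ge> 0")
    case True thus ?thesis using abc unfolding sq D_def by linarith
  next
    case False
    have "\<not> (1 - c^2 > 0)" using Dc False by (simp add: zero_le_mult_iff)
    moreover have "\<not> (1 - b^2 > 0)" using Db False by (simp add: zero_le_mult_iff)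
    moreover have "\<not> (1 - a^2 > 0)" using Da False by (simp add: zero_le_mult_iff)
    ultimately have "\<not> a^2 < 1" "\<not> b^2 < 1" "\<not> c^2 < 1" by simp_all
    hence "\<bar>a\<bar> = 1" "\<bar>b\<bar> = 1" "\<bar>c\<bar> = 1"
      using a1 b1 c1 abs_square_less_1[of a] abs_square_less_1[of b] abs_square_less_1[of c] by linarith+
    thus ?thesis by simp
  qed
qed

lemma part2:
  fixes \<alpha> \<beta> \<gamma> :: real and k :: nat
  assumes "0 \<le> \<alpha>" "\<alpha> \<le> pi/2" "0 \<le> \<beta>" "\<beta> \<le> pi/2" "\<gamma> \<le> pi/2"
    "\<bar>\<alpha> - \<beta>\<bar> \<le> \<gamma>" "k \<ge> 1"
  shows "\<bar>cos \<alpha> ^ k - cos \<beta> ^ k\<bar> \<le> sqrt (real k) * sin \<gamma>"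
proof -
  define x where "x = cos \<alpha>"
  define y where "y = cos \<beta>"
  define z where "z = cos (\<alpha> - \<beta>)"
  have pi0: "0 < pi" by (rule pi_gt_zero)
  have x: "0 \<le> x" "x \<le> 1" unfolding x_def
    by (rule cos_ge_zero, use assms pi0 in linarith, use assms in linarith) (rule cos_le_one)
  have y: "0 \<le> y" "y \<le> 1" unfolding y_def
    by (rule cos_ge_zero, use assms pi0 in linarith, use assms in linarith) (rule cos_le_one)
  have ab: "-(pi/2) \<le> \<alpha> - \<beta>" "\<alpha> - \<beta> \<le> pi/2" using assms(5,6) by (simp_all add: abs_le_iff)
  have z: "0 \<le> z" "z \<le> 1" unfolding z_def
    by (rule cos_ge_zero[OF ab]) (rule cos_le_one)
  have zeq: "z = x * y + sin \<alpha> * sin \<beta>" unfolding z_def x_def y_def by (simp add: cos_diff)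
  have sa: "sin \<alpha> ^ 2 = 1 - x^2" and sb: "sin \<beta> ^ 2 = 1 - y^2"
    unfolding x_def y_def by (simp_all add: sin_squared_eq)
  have "x^2 + y^2 + z^2 - 2*x*y*z = x^2 + y^2 + (sin \<alpha>)^2 * (sin \<beta>)^2 - x^2*y^2"
    unfolding zeq by algebra
  also have "\<dots> = 1" unfolding sa sb by algebra
  finally have con: "x^2 + y^2 + z^2 \<le> 1 + 2*x*y*z" by simp
  have sz: "1 - z^2 = sin (\<alpha> - \<beta>) ^ 2" unfolding z_def by (simp add: sin_squared_eq)
  have A: "\<bar>x ^ k - y ^ k\<bar> \<le> sqrt (real k * (1 - z^2))"
  proof (cases "k = 1")
    case True thus ?thesis using partA[OF x y z con] by simp
  next
    case False
    hence k2: "real k \<ge> 2" using assms(7) by simp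
    have "\<bar>x powr real k - y powr real k\<bar> \<le> sqrt (1 - z powr real k)"
      using core_abs[OF x y z con k2] .
    hence 1: "\<bar>x ^ k - y ^ k\<bar> \<le> sqrt (1 - z ^ k)"
      using x y z assms(7) by (simp add: powr_realpow')
    have "1 + real k * (z - 1) \<le> (1 + (z - 1)) ^ k" using z by (intro Bernoulli_inequality) simp
    hence "1 - z ^ k \<le> real k * (1 - z)" by (simp add: algebra_simps)
    also have "\<dots> \<le> real k * (1 - z^2)"
      using z by (intro mult_left_mono) (auto simp: power2_eq_square mult_left_le)
    finally have "sqrt (1 - z ^ k) \<le> sqrt (real k * (1 - z^2))" by simp
    thus ?thesis using 1 by linarith
  qed
  have "sqrt (real k * (1 - z^2)) = sqrt (real k) * \<bar>sin (\<alpha> - \<beta>)\<bar>"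
    unfolding sz by (simp add: real_sqrt_mult)
  moreover have "\<bar>sin (\<alpha> - \<beta>)\<bar> \<le> sin \<gamma>"
  proof -
    have "\<bar>sin (\<alpha> - \<beta>)\<bar> = sin \<bar>\<alpha> - \<beta>\<bar>"
    proof (cases "\<alpha> - \<beta> \<ge> 0")
      case True
      hence "0 \<le> sin (\<alpha> - \<beta>)" using assms by (intro sin_ge_zero) auto
      thus ?thesis using True by simp
    next
      case False
      hence "0 \<le> sin (\<beta> - \<alpha>)" using assms by (intro sin_ge_zero) auto
      moreover have "sin (\<alpha> - \<beta>) = - sin (\<beta> - \<alpha>)" by (metis minus_diff_eq sin_minus)
      moreover have "\<bar>\<alpha> - \<beta>\<bar> = \<beta> - \<alpha>" using False by simp
      ultimately show ?thesis by simp
    qed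
    also have "\<dots> \<le> sin \<gamma>" using assms by (intro sin_monotone_2pi_le) auto
    finally show ?thesis .
  qed
  ultimately have "sqrt (real k * (1 - z^2)) \<le> sqrt (real k) * sin \<gamma>"
    by (simp add: mult_left_mono)
  thus ?thesis using A by (simp add: x_def y_def)
qed

theorem corollary4:
  shows "(\<forall>a b c :: real. psd_matrix (Bmat a b c) \<longrightarrow>
            \<bar>\<bar>a\<bar> - \<bar>b\<bar>\<bar> \<le> sqrt (1 - \<bar>c\<bar>^2)
          \<and> sqrt (1 - \<bar>c\<bar>^2) \<le> sqrt 2 * sqrt (1 - \<bar>c\<bar>)
          \<and> (\<forall>k::real. k \<ge> 2 \<longrightarrow>
               \<bar>\<bar>a\<bar> powr k - \<bar>b\<bar> powr k\<bar> \<le> sqrt (1 - \<bar>c\<bar> powr k)))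
       \<and> (\<forall>\<alpha> \<beta> \<gamma> :: real. 0 \<le> \<alpha> \<and> \<alpha> \<le> pi/2 \<and> 0 \<le> \<beta> \<and> \<beta> \<le> pi/2 \<and> 0 \<le> \<gamma> \<and> \<gamma> \<le> pi/2
            \<and> \<bar>\<alpha> - \<beta>\<bar> \<le> \<gamma> \<and> \<gamma> \<le> \<alpha> + \<beta> \<longrightarrow>
            (\<forall>k::nat. k \<ge> 1 \<longrightarrow> \<bar>cos \<alpha> ^ k - cos \<beta> ^ k\<bar> \<le> sqrt (real k) * sin \<gamma>))"
proof (intro conjI allI impI)
  fix a b c :: real
  assume psd: "psd_matrix (Bmat a b c)"
  note F = psd_facts[OF psd]
  have xs: "0 \<le> \<bar>a\<bar>" "0 \<le> \<bar>b\<bar>" "0 \<le> \<bar>c\<bar>" by simp_all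
  show "\<bar>\<bar>a\<bar> - \<bar>b\<bar>\<bar> \<le> sqrt (1 - \<bar>c\<bar>^2)"
    using partA[OF xs(1) F(1) xs(2) F(2) xs(3) F(3) F(4)] .
  show "sqrt (1 - \<bar>c\<bar>^2) \<le> sqrt 2 * sqrt (1 - \<bar>c\<bar>)"
  proof -
    have "1 - \<bar>c\<bar>^2 \<le> 2 * (1 - \<bar>c\<bar>)"
    proof -
      have "0 \<le> (1 - \<bar>c\<bar>) * (1 - \<bar>c\<bar>)" by simp
      thus ?thesis by (simp add: power2_eq_square algebra_simps)
    qed
    hence "sqrt (1 - \<bar>c\<bar>^2) \<le> sqrt (2 * (1 - \<bar>c\<bar>))" by (rule real_sqrt_le_mono)
    thus ?thesis by (simp only: real_sqrt_mult)
  qed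
  fix k :: real
  assume "k \<ge> 2"
  thus "\<bar>\<bar>a\<bar> powr k - \<bar>b\<bar> powr k\<bar> \<le> sqrt (1 - \<bar>c\<bar> powr k)"
    using core_abs[OF xs(1) F(1) xs(2) F(2) xs(3) F(3) F(4)] by simp
next
  fix \<alpha> \<beta> \<gamma> :: real and k :: nat
  assume "0 \<le> \<alpha> \<and> \<alpha> \<le> pi/2 \<and> 0 \<le> \<beta> \<and> \<beta> \<le> pi/2 \<and> 0 \<le> \<gamma> \<and> \<gamma> \<le> pi/2
            \<and> \<bar>\<alpha> - \<beta>\<bar> \<le> \<gamma> \<and> \<gamma> \<le> \<alpha> + \<beta>" "k \<ge> 1"
  thus "\<bar>cos \<alpha> ^ k - cos \<beta> ^ k\<bar> \<le> sqrt (real k) * sin \<gamma>"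
    using part2 by blast
qed

end
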